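(* In the setting of problem (P) with $f_0(x)=\mathbb{E}_\xi[F(x,\xi)]$, run Algorithm LCSPG with $\gamma_k>L_0/2$, $\beta_k\in(0,2\gamma_k-L_0)$, and suppose there is a constant $B>0$ such that $\|\lambda^{k+1}\|\le B$ for all $k$ and all realizations. Let $\zeta^k:=G^k-\nabla f_0(x^k)$, $D:=\sqrt{(\psi_0(x^0)-\psi_0^* )/L_0}$ and let $\alpha_0,\dots,\alpha_K\ge0$ be nondecreasing. Then $$\sum_{k=0}^K\frac{\alpha_k(2\gamma_k-\beta_k-L_0)}{4(\gamma_k+L_0+2B\|L\|)^2}\|\partial_x\mathcal{L}(x^{k+1},\lambda^{k+1})\|_-^2\le L_0D^2\alpha_K+\sum_{k=0}^K\Big(\frac{\alpha_k(2\gamma_k-\beta_k-L_0)}{2(\gamma_k+L_0+2B\|L\|)^2}+\frac{\alpha_K}{2\beta_k}\Big)\|\zeta^k\|^2,$$ $$\sum_{k=0}^K\alpha_k(2\gamma_k-\beta_k-L_0)\langle\lambda^{k+1},|\psi(x^{k+1})-\eta|\rangle\le2BL_0\|L\|D^2\alpha_K+B\|L\|\sum_{k=0}^K\frac{\alpha_K\|\zeta^k\|^2}{\beta_k}+B\sum_{k=0}^K\alpha_k(2\gamma_k-\beta_k-L_0)\|\eta-\eta^k\|,$$ where $|\cdot|$ is componentwise.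
   Context: Problem (P): minimize $\psi_0(x):=f_0(x)+\chi_0(x)$ over $x\in\mathbb{R}^d$ subject to $\psi_i(x):=f_i(x)+\chi_i(x)\le\eta_i$, $i\in[m]:=\{1,\dots,m\}$. Standing assumptions: $\chi_0$ is proper, convex, lower semicontinuous; each $\chi_i$ ($i\in[m]$) is convex and continuous on $\mathrm{dom}\,\chi_0$; each $f_i$ ($i=0,\dots,m$) is differentiable with $L_i$-Lipschitz gradient on $\mathrm{dom}\,\chi_0$; $L:=(L_1,\dots,L_m)^\top$; the optimal value $\psi_0^*$ of (P) is finite; the feasible set $\mathcal{X}:=\{x\in\mathrm{dom}\,\chi_0:\psi_i(x)\le\eta_i,\ i\in[m]\}$ is nonempty and compact. Write $\psi=(\psi_1,\dots,\psi_m)^\top$; vector inequalities are componentwise. Subdifferential: $\partial\psi_i(x):=\nabla f_i(x)+\partial\chi_i(x)$. Lagrangian $\mathcal{L}(x,\lambda)=\psi_0(x)+\sum_{i=1}^m\lambda_i(\psi_i(x)-\eta_i)$, $\partial_x\mathcal{L}(x,\lambda):=\partial\psi_0(x)+\sum_i\lambda_i\partial\psi_i(x)$; for a set $S$, $\|S\|_-:=\inf\{\|s\|:s\in S\}$. Stochastic setting: $f_0(x)=\mathbb{E}_\xi[F(x,\xi)]$ with $F(\cdot,\xi)$ differentiable; a stochastic first-order oracle returns $\nabla F(x,\xi)$ with $\mathbb{E}[\nabla F(x,\xi)]=\nabla f_0(x)$ and $\mathbb{E}\|\nabla F(x,\xi)-\nabla f_0(x)\|^2\le\sigma^2$. Algorithm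 LCSPG: given $x^0\in\mathrm{dom}\,\chi_0$, $\eta^0$ with $\psi(x^0)<\eta^0<\eta$, batch sizes $b_k$, $\gamma_k>0$. At step $k$: draw $b_k$ i.i.d. samples $\xi_{1,k},\dots,\xi_{b_k,k}$ and set $G^k=\frac1{b_k}\sum_{j}\nabla F(x^k,\xi_{j,k})$; set $\psi_0^k(x)=\langle G^k,x\rangle+\frac{\gamma_k}{2}\|x-x^k\|^2+\chi_0(x)$ and, for $i\in[m]$, $\psi_i^k(x)=f_i(x^k)+\langle\nabla f_i(x^k),x-x^k\rangle+\frac{L_i}{2}\|x-x^k\|^2+\chi_i(x)$; let $x^{k+1}$ minimize $\psi_0^k$ subject to $\psi_i^k(x)\le\eta_i^k$, $i\in[m]$; set $\eta^{k+1}=\eta^k+\delta^k$ with $\delta^k>0$ and $\eta^{k+1}<\eta$. A Lagrange multiplier $\lambda^{k+1}\in\mathbb{R}^m_+$ satisfies $0\in\partial\psi_0^k(x^{k+1})+\sum_i\lambda_i^{k+1}\partial\psi_i^k(x^{k+1})$ and $\lambda_i^{k+1}(\psi_i^k(x^{k+1})-\eta_i^k)=0$. *)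

theory Defs
  imports "HOL-Analysis.Analysis"
begin

text \<open>Convex subdifferential of a real-valued function h whose effective domain is S
  (h is regarded as +infinity outside S).\<close>
definition subdiff :: "'a::real_inner set \<Rightarrow> ('a \<Rightarrow> real) \<Rightarrow> 'a \<Rightarrow> 'a set" where
  "subdiff S h x = {g. \<forall>y\<in>S. h x + inner g (y - x) \<le> h y}"

definition vnorm :: "nat \<Rightarrow> (nat \<Rightarrow> real) \<Rightarrow> real" where
  "vnorm m v = sqrt (\<Sum>i=1..m. (v i)\<^sup>2)"

definition setnorm_minus :: "'a::real_normed_vector set \<Rightarrow> real" where
  "setnorm_minus S = Inf (norm ` S)"

text \<open>Feasible set of (P): index 0 is the objective, indices 1..m the constraints,
  C = dom chi_0.\<close>
definition feasible_set ::
  "'a set \<Rightarrow> (nat \<Rightarrow> 'a \<Rightarrow> real) \<Rightarrow> (nat \<Rightarrow> 'a \<Rightarrow> real) \<Rightarrow> nat \<Rightarrow> (nat \<Rightarrow> real) \<Rightarrow> 'a set" where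
  "feasible_set C f chi m eta = {x\<in>C. \<forall>i\<in>{1..m}. f i x + chi i x \<le> eta i}"

definition lagr_subdiff ::
  "'a::real_inner set \<Rightarrow> (nat \<Rightarrow> 'a \<Rightarrow> 'a) \<Rightarrow> (nat \<Rightarrow> 'a \<Rightarrow> real) \<Rightarrow> nat \<Rightarrow> (nat \<Rightarrow> real) \<Rightarrow> 'a \<Rightarrow> 'a set"
  where
  "lagr_subdiff C gf chi m lam x =
     {gf 0 x + v0 + (\<Sum>i=1..m. lam i *\<^sub>R (gf i x + v i)) | v0 v.
        v0 \<in> subdiff C (chi 0) x \<and> (\<forall>i\<in>{1..m}. v i \<in> subdiff C (chi i) x)}"

end

theory Submission
  imports Defs
begin

lemma deriv_line:
  fixes f :: "'a::real_inner \<Rightarrow> real"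
  assumes "(f has_derivative (\<lambda>h. inner g h)) (at (x + t *\<^sub>R d))"
  shows "((\<lambda>s. f (x + s *\<^sub>R d)) has_real_derivative inner g d) (at t)"
proof -
  have l: "((\<lambda>s. x + s *\<^sub>R d) has_derivative (\<lambda>h. h *\<^sub>R d)) (at t)"
    by (auto intro!: derivative_eq_intros)
  have "((\<lambda>s. f (x + s *\<^sub>R d)) has_derivative (\<lambda>h. inner g (h *\<^sub>R d))) (at t)"
    using has_derivative_compose[OF l assms] by (simp add: o_def)
  then show ?thesis
    by (simp add: has_field_derivative_def mult.commute[of _ "inner g d"])
qed

lemma descent:
  fixes f :: "'a::real_inner \<Rightarrow> real"
  assumes C: "convex C" and xC: "x \<in> C" and yC: "y \<in> C"
    and der: "\<And>z. z \<in> C \<Longrightarrow> (f has_derivative (\<lambda>h. inner (g z) h)) (at z)"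
    and lip: "\<And>u v. u \<in> C \<Longrightarrow> v \<in> C \<Longrightarrow> norm (g u - g v) \<le> L * norm (u - v)"
  shows "\<bar>f y - f x - inner (g x) (y - x)\<bar> \<le> L / 2 * (norm (y - x))\<^sup>2"
proof -
  define d where "d = y - x"
  have inC: "x + t *\<^sub>R d \<in> C" if "0 \<le> t" "t \<le> 1" for t
  proof -
    have "x + t *\<^sub>R d = (1 - t) *\<^sub>R x + t *\<^sub>R y" by (simp add: d_def algebra_simps)
    then show ?thesis using convexD_alt[OF C xC yC] that by simp
  qed
  have bnd: "\<bar>inner (g (x + t *\<^sub>R d)) d - inner (g x) d\<bar> \<le> L * t * (norm d)\<^sup>2"
    if "0 \<le> t" "t \<le> 1" for t
  proof -
    have "\<bar>inner (g (x + t *\<^sub>R d)) d - inner (g x) d\<bar> = \<bar>inner (g (x + t *\<^sub>R d) - g x) d\<bar>"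
      by (simp add: inner_diff_left)
    also have "\<dots> \<le> norm (g (x + t *\<^sub>R d) - g x) * norm d" by (rule Cauchy_Schwarz_ineq2)
    also have "\<dots> \<le> (L * norm (t *\<^sub>R d)) * norm d"
      using lip[OF inC[OF that] xC] by (intro mult_right_mono) auto
    also have "\<dots> = L * t * (norm d)\<^sup>2" using that by (simp add: power2_eq_square)
    finally show ?thesis .
  qed
  define phi where "phi = (\<lambda>s. f (x + s *\<^sub>R d) - s * inner (g x) d)"
  have dphi: "(phi has_real_derivative (inner (g (x + t *\<^sub>R d)) d - inner (g x) d)) (at t)"
    if "0 \<le> t" "t \<le> 1" for t
    unfolding phi_def
    by (rule derivative_eq_intros deriv_line der inC that refl | simp)+
  define p1 where "p1 = (\<lambda>s. phi s - L / 2 * s\<^sup>2 * (norm d)\<^sup>2)"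
  define p2 where "p2 = (\<lambda>s. phi s + L / 2 * s\<^sup>2 * (norm d)\<^sup>2)"
  have d1: "(p1 has_real_derivative (inner (g (x + t *\<^sub>R d)) d - inner (g x) d - L * t * (norm d)\<^sup>2)) (at t)"
    if "0 \<le> t" "t \<le> 1" for t
    unfolding p1_def
    by (rule derivative_eq_intros dphi that refl | simp)+
  have d2: "(p2 has_real_derivative (inner (g (x + t *\<^sub>R d)) d - inner (g x) d + L * t * (norm d)\<^sup>2)) (at t)"
    if "0 \<le> t" "t \<le> 1" for t
    unfolding p2_def
    by (rule derivative_eq_intros dphi that refl | simp)+
  obtain z1 where z1: "0 < z1" "z1 < 1" "p1 1 - p1 0 = (1 - 0) * (inner (g (x + z1 *\<^sub>R d)) d - inner (g x) d - L * z1 * (norm d)\<^sup>2)"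
    using MVT2[of 0 1 p1, OF _ d1] by auto
  obtain z2 where z2: "0 < z2" "z2 < 1" "p2 1 - p2 0 = (1 - 0) * (inner (g (x + z2 *\<^sub>R d)) d - inner (g x) d + L * z2 * (norm d)\<^sup>2)"
    using MVT2[of 0 1 p2, OF _ d2] by auto
  have "p1 1 \<le> p1 0" using z1 bnd[of z1] by auto
  moreover have "p2 0 \<le> p2 1" using z2 bnd[of z2] by auto
  ultimately have "f y - f x - inner (g x) (y - x) \<le> L / 2 * (norm (y - x))\<^sup>2"
     "-(f y - f x - inner (g x) (y - x)) \<le> L / 2 * (norm (y - x))\<^sup>2"
    by (simp_all add: p1_def p2_def phi_def d_def inner_diff_right algebra_simps)
  then show ?thesis by (simp only: abs_le_iff)
qed

theorem mainTheorem11: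
  fixes C :: "'a::euclidean_space set"
    and f :: "nat \<Rightarrow> 'a \<Rightarrow> real" and gf :: "nat \<Rightarrow> 'a \<Rightarrow> 'a"
    and chi :: "nat \<Rightarrow> 'a \<Rightarrow> real" and Lc :: "nat \<Rightarrow> real"
    and m :: nat and eta :: "nat \<Rightarrow> real" and psistar :: real
    and F :: "'a \<Rightarrow> 'b \<Rightarrow> real" and gF :: "'a \<Rightarrow> 'b \<Rightarrow> 'a"
    and xi :: "nat \<Rightarrow> nat \<Rightarrow> 'b" and b :: "nat \<Rightarrow> nat"
    and x :: "nat \<Rightarrow> 'a" and G :: "nat \<Rightarrow> 'a" and etak :: "nat \<Rightarrow> nat \<Rightarrow> real"
    and lam :: "nat \<Rightarrow> nat \<Rightarrow> real"
    and gamma beta alpha :: "nat \<Rightarrow> real" and B D :: real and K :: nat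
  assumes
    \<comment> \<open>chi_0 proper, convex, lsc, with effective domain C\<close>
    C_ne: "C \<noteq> {}" and C_convex: "convex C" and chi0_convex: "convex_on C (chi 0)"
    and chi0_lsc: "closed {(y, t). y \<in> C \<and> chi 0 y \<le> t}"
    \<comment> \<open>chi_i convex and continuous on dom chi_0\<close>
    and chi_convex: "\<And>i. i \<in> {1..m} \<Longrightarrow> convex_on C (chi i)"
    and chi_cont: "\<And>i. i \<in> {1..m} \<Longrightarrow> continuous_on C (chi i)"
    \<comment> \<open>f_i differentiable with L_i-Lipschitz gradient on dom chi_0\<close>
    and f_diff: "\<And>i y. i \<in> {0..m} \<Longrightarrow> y \<in> C \<Longrightarrow>
                   (f i has_derivative (\<lambda>h. inner (gf i y) h)) (at y)"
    and gf_lip: "\<And>i y z. i \<in> {0..m} \<Longrightarrow> y \<in> C \<Longrightarrow> z \<in> C \<Longrightarrow>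
                   norm (gf i y - gf i z) \<le> Lc i * norm (y - z)"
    and L_nonneg: "\<And>i. i \<in> {0..m} \<Longrightarrow> 0 \<le> Lc i"
    and L0_pos: "0 < Lc 0"
    \<comment> \<open>feasible set nonempty and compact; optimal value finite\<close>
    and X_ne: "feasible_set C f chi m eta \<noteq> {}"
    and X_compact: "compact (feasible_set C f chi m eta)"
    and psistar_def: "psistar = Inf ((\<lambda>y. f 0 y + chi 0 y) ` feasible_set C f chi m eta)"
    and psistar_finite: "bdd_below ((\<lambda>y. f 0 y + chi 0 y) ` feasible_set C f chi m eta)"
    \<comment> \<open>stochastic gradient: F(.,xi) differentiable, mini-batch average (one realization)\<close>
    and F_diff: "\<And>y s. ((\<lambda>z. F z s) has_derivative (\<lambda>h. inner (gF y s) h)) (at y)"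
    and b_pos: "\<And>k. 0 < b k"
    and G_def: "\<And>k. G k = (1 / real (b k)) *\<^sub>R (\<Sum>j<b k. gF (x k) (xi j k))"
    \<comment> \<open>Algorithm LCSPG\<close>
    and x0: "x 0 \<in> C"
    and eta0: "\<And>i. i \<in> {1..m} \<Longrightarrow> f i (x 0) + chi i (x 0) < etak 0 i \<and> etak 0 i < eta i"
    and eta_step: "\<And>k i. i \<in> {1..m} \<Longrightarrow> etak k i < etak (Suc k) i \<and> etak (Suc k) i < eta i"
    and gamma_pos: "\<And>k. Lc 0 / 2 < gamma k"
    and beta_rng: "\<And>k. 0 < beta k \<and> beta k < 2 * gamma k - Lc 0"
    and x_feas: "\<And>k. x (Suc k) \<in> C \<and> (\<forall>i\<in>{1..m}.
          f i (x k) + inner (gf i (x k)) (x (Suc k) - x k) + Lc i / 2 * (norm (x (Suc k) - x k))\<^sup>2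
            + chi i (x (Suc k)) \<le> etak k i)"
    and x_min: "\<And>k y. y \<in> C \<Longrightarrow> (\<forall>i\<in>{1..m}.
          f i (x k) + inner (gf i (x k)) (y - x k) + Lc i / 2 * (norm (y - x k))\<^sup>2 + chi i y \<le> etak k i)
        \<Longrightarrow> inner (G k) (x (Suc k)) + gamma k / 2 * (norm (x (Suc k) - x k))\<^sup>2 + chi 0 (x (Suc k))
            \<le> inner (G k) y + gamma k / 2 * (norm (y - x k))\<^sup>2 + chi 0 y"
    \<comment> \<open>Lagrange multipliers (KKT conditions of the subproblem)\<close>
    and lam_nonneg: "\<And>k i. i \<in> {1..m} \<Longrightarrow> 0 \<le> lam (Suc k) i"
    and lam_kkt: "\<And>k. \<exists>v0 v. v0 \<in> subdiff C (chi 0) (x (Suc k))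
          \<and> (\<forall>i\<in>{1..m}. v i \<in> subdiff C (chi i) (x (Suc k)))
          \<and> 0 = G k + gamma k *\<^sub>R (x (Suc k) - x k) + v0
               + (\<Sum>i=1..m. lam (Suc k) i *\<^sub>R
                    (gf i (x k) + Lc i *\<^sub>R (x (Suc k) - x k) + v i))"
    and lam_cs: "\<And>k i. i \<in> {1..m} \<Longrightarrow> lam (Suc k) i *
          (f i (x k) + inner (gf i (x k)) (x (Suc k) - x k) + Lc i / 2 * (norm (x (Suc k) - x k))\<^sup>2
            + chi i (x (Suc k)) - etak k i) = 0"
    \<comment> \<open>bounded multipliers\<close>
    and B_pos: "0 < B"
    and lam_bound: "\<And>k. vnorm m (lam (Suc k)) \<le> B"
    \<comment> \<open>D and weights\<close>
    and D_def: "D = sqrt ((f 0 (x 0) + chi 0 (x 0) - psistar) / Lc 0)"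
    and alpha_nonneg: "\<And>k. k \<le> K \<Longrightarrow> 0 \<le> alpha k"
    and alpha_mono: "\<And>k l. k \<le> l \<Longrightarrow> l \<le> K \<Longrightarrow> alpha k \<le> alpha l"
  shows
    "(\<Sum>k=0..K. alpha k * (2 * gamma k - beta k - Lc 0)
         / (4 * (gamma k + Lc 0 + 2 * B * vnorm m Lc)\<^sup>2)
         * (setnorm_minus (lagr_subdiff C gf chi m (lam (Suc k)) (x (Suc k))))\<^sup>2)
      \<le> Lc 0 * D\<^sup>2 * alpha K
        + (\<Sum>k=0..K. (alpha k * (2 * gamma k - beta k - Lc 0)
                        / (2 * (gamma k + Lc 0 + 2 * B * vnorm m Lc)\<^sup>2)
                      + alpha K / (2 * beta k)) * (norm (G k - gf 0 (x k)))\<^sup>2)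
     \<and> (\<Sum>k=0..K. alpha k * (2 * gamma k - beta k - Lc 0)
          * (\<Sum>i=1..m. lam (Suc k) i * \<bar>f i (x (Suc k)) + chi i (x (Suc k)) - eta i\<bar>))
      \<le> 2 * B * Lc 0 * vnorm m Lc * D\<^sup>2 * alpha K
        + B * vnorm m Lc * (\<Sum>k=0..K. alpha K * (norm (G k - gf 0 (x k)))\<^sup>2 / beta k)
        + B * (\<Sum>k=0..K. alpha k * (2 * gamma k - beta k - Lc 0) * vnorm m (\<lambda>i. eta i - etak k i))"
proof -
  define psi where "psi = (\<lambda>i y. f i y + chi i y)"
  define d where "d = (\<lambda>k. norm (x (Suc k) - x k))"
  define zeta where "zeta = (\<lambda>k. G k - gf 0 (x k))"
  define c where "c = (\<lambda>k. 2 * gamma k - beta k - Lc 0)"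
  define nL where "nL = vnorm m Lc"
  define M where "M = (\<lambda>k. gamma k + Lc 0 + 2 * B * nL)"
  have xC: "x k \<in> C" for k
    by (cases k) (use x0 x_feas in auto)
  have desc: "\<bar>f i z - f i y - inner (gf i y) (z - y)\<bar> \<le> Lc i / 2 * (norm (z - y))\<^sup>2"
    if "i \<in> {0..m}" "y \<in> C" "z \<in> C" for i y z
    by (rule descent[OF C_convex that(2,3)]) (use f_diff gf_lip that in auto)
  have desc_up: "f i z \<le> f i y + inner (gf i y) (z - y) + Lc i / 2 * (norm (z - y))\<^sup>2"
    if "i \<in> {0..m}" "y \<in> C" "z \<in> C" for i y z
    using desc[OF that] by (simp only: abs_le_iff) linarith
  have desc_lo: "f i y + inner (gf i y) (z - y) - Lc i / 2 * (norm (z - y))\<^sup>2 \<le> f i z"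
    if "i \<in> {0..m}" "y \<in> C" "z \<in> C" for i y z
    using desc[OF that] by (simp only: abs_le_iff) linarith
  have feas_k: "psi i (x k) \<le> etak k i" if "i \<in> {1..m}" for i k
  proof (cases k)
    case 0 then show ?thesis using eta0[OF that] by (simp add: psi_def)
  next
    case (Suc j)
    have "f i (x (Suc j)) \<le> f i (x j) + inner (gf i (x j)) (x (Suc j) - x j) + Lc i / 2 * (norm (x (Suc j) - x j))\<^sup>2"
      using desc_up[of i "x j" "x (Suc j)"] that xC by auto
    then have "psi i (x (Suc j)) \<le> etak j i"
      using x_feas[of j] that unfolding psi_def by fastforce
    then show ?thesis using eta_step[OF that, of j] Suc by simp
  qed
  have etak_lt: "etak k i < eta i" if "i \<in> {1..m}" for i k
    by (cases k) (use eta0[OF that] eta_step[OF that] in auto)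
  have Xk: "x k \<in> feasible_set C f chi m eta" for k
    unfolding feasible_set_def using xC feas_k etak_lt
    by (auto simp: psi_def) (smt (verit))
  have psistar_le: "psistar \<le> psi 0 (x k)" for k
    unfolding psistar_def psi_def using Xk psistar_finite by (auto intro: cInf_lower)
  have growth: "gamma k * (d k)\<^sup>2 + chi 0 (x (Suc k)) - chi 0 (x k) \<le> inner (G k) (x k - x (Suc k))" for k
  proof -
    define Dl where "Dl = x (Suc k) - x k"
    obtain v0 v where v0: "v0 \<in> subdiff C (chi 0) (x (Suc k))"
      and v: "\<forall>i\<in>{1..m}. v i \<in> subdiff C (chi i) (x (Suc k))"
      and kkt: "0 = G k + gamma k *\<^sub>R Dl + v0
               + (\<Sum>i=1..m. lam (Suc k) i *\<^sub>R (gf i (x k) + Lc i *\<^sub>R Dl + v i))"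
      using lam_kkt[of k] unfolding Dl_def by blast
    have nd: "inner Dl Dl = (d k)\<^sup>2" by (simp add: Dl_def d_def power2_norm_eq_inner)
    have sub0: "chi 0 (x (Suc k)) + inner v0 (x k - x (Suc k)) \<le> chi 0 (x k)"
      using v0 xC unfolding subdiff_def by blast
    have term_nonneg: "0 \<le> inner (lam (Suc k) i *\<^sub>R (gf i (x k) + Lc i *\<^sub>R Dl + v i)) Dl"
      if i: "i \<in> {1..m}" for i
    proof -
      let ?l = "lam (Suc k) i"
      have l0: "0 \<le> ?l" using lam_nonneg i by auto
      have Li: "0 \<le> Lc i" using L_nonneg i by auto
      have subi: "chi i (x (Suc k)) + inner (v i) (x k - x (Suc k)) \<le> chi i (x k)"
        using v i xC unfolding subdiff_def by blast
      have cs: "?l * (f i (x k) + inner (gf i (x k)) Dl + Lc i / 2 * (d k)\<^sup>2 + chi i (x (Suc k)) - etak k i) = 0"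
        using lam_cs[OF i, of k] by (simp add: Dl_def d_def)
      have fe: "f i (x k) + chi i (x k) \<le> etak k i" using feas_k[OF i, of k] by (simp add: psi_def)
      have "inner (v i) (x k - x (Suc k)) = - inner (v i) Dl" by (simp add: Dl_def inner_diff_right)
      then have A: "0 \<le> inner (gf i (x k)) Dl + Lc i / 2 * (d k)\<^sup>2 + inner (v i) Dl \<or> ?l = 0"
        using cs fe subi by (smt (verit, best) mult_eq_0_iff)
      have B: "0 \<le> ?l * (inner (gf i (x k)) Dl + Lc i / 2 * (d k)\<^sup>2 + inner (v i) Dl)"
        using A l0 by auto
      have "0 \<le> ?l * (Lc i / 2 * (d k)\<^sup>2)" using l0 Li by simp
      with B have "0 \<le> ?l * (inner (gf i (x k)) Dl + Lc i * (d k)\<^sup>2 + inner (v i) Dl)"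
        by (simp add: algebra_simps)
      then show ?thesis by (simp add: inner_add_left nd)
    qed
    have S: "0 \<le> inner (\<Sum>i=1..m. lam (Suc k) i *\<^sub>R (gf i (x k) + Lc i *\<^sub>R Dl + v i)) Dl"
      unfolding inner_sum_left by (rule sum_nonneg) (use term_nonneg in auto)
    have "0 = inner (G k + gamma k *\<^sub>R Dl + v0
               + (\<Sum>i=1..m. lam (Suc k) i *\<^sub>R (gf i (x k) + Lc i *\<^sub>R Dl + v i))) Dl"
      by (metis kkt inner_zero_left)
    also have "\<dots> = inner (G k) Dl + gamma k * (d k)\<^sup>2 + inner v0 Dl
        + inner (\<Sum>i=1..m. lam (Suc k) i *\<^sub>R (gf i (x k) + Lc i *\<^sub>R Dl + v i)) Dl"
      by (simp add: inner_add_left nd)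
    finally have E: "inner (G k) Dl + gamma k * (d k)\<^sup>2 + inner v0 Dl \<le> 0" using S by linarith
    have "inner v0 (x k - x (Suc k)) = - inner v0 Dl" "inner (G k) (x k - x (Suc k)) = - inner (G k) Dl"
      by (simp_all add: Dl_def inner_diff_right)
    then show ?thesis using E sub0 by linarith
  qed
  have step: "c k / 2 * (d k)\<^sup>2 \<le> psi 0 (x k) - psi 0 (x (Suc k)) + (norm (zeta k))\<^sup>2 / (2 * beta k)" for k
  proof -
    define Dl where "Dl = x (Suc k) - x k"
    have nD: "norm Dl = d k" by (simp add: Dl_def d_def)
    have f0: "f 0 (x (Suc k)) \<le> f 0 (x k) + inner (gf 0 (x k)) Dl + Lc 0 / 2 * (d k)\<^sup>2"
      using desc_up[of 0 "x k" "x (Suc k)"] xC by (simp add: Dl_def d_def)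
    have gr: "gamma k * (d k)\<^sup>2 + chi 0 (x (Suc k)) - chi 0 (x k) \<le> - inner (G k) Dl"
      using growth[of k] by (simp add: Dl_def inner_diff_right)
    have zi: "inner (gf 0 (x k)) Dl - inner (G k) Dl = - inner (zeta k) Dl"
      by (simp add: zeta_def inner_diff_left)
    have bp: "0 < beta k" using beta_rng by auto
    have cs: "- inner (zeta k) Dl \<le> norm (zeta k) * d k"
      using Cauchy_Schwarz_ineq2[of "zeta k" Dl] nD by (smt (verit) abs_le_iff)
    have amgm: "norm (zeta k) * d k \<le> (norm (zeta k))\<^sup>2 / (2 * beta k) + beta k / 2 * (d k)\<^sup>2"
    proof -
      have "0 \<le> (norm (zeta k) - beta k * d k)\<^sup>2" by simp
      then have "2 * beta k * (norm (zeta k) * d k) \<le> (norm (zeta k))\<^sup>2 + (beta k)\<^sup>2 * (d k)\<^sup>2"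
        by (simp add: power2_eq_square algebra_simps)
      then show ?thesis using bp by (simp add: field_simps power2_eq_square)
    qed
    show ?thesis using f0 gr zi cs amgm unfolding psi_def c_def by (simp add: field_simps)
  qed
  have cpos: "0 < c k" for k using beta_rng[of k] by (simp add: c_def)
  have aK: "0 \<le> alpha K" using alpha_nonneg by simp
  have sum1: "(\<Sum>k=0..K. alpha k * c k * (d k)\<^sup>2)
      \<le> 2 * alpha K * (psi 0 (x 0) - psistar) + (\<Sum>k=0..K. alpha K * (norm (zeta k))\<^sup>2 / beta k)"
  proof -
    define sk where "sk = (\<lambda>k. psi 0 (x k) - psi 0 (x (Suc k)) + (norm (zeta k))\<^sup>2 / (2 * beta k))"
    have "alpha k * c k * (d k)\<^sup>2 \<le> 2 * alpha K * sk k" if "k \<in> {0..K}" for k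
    proof -
      have a: "0 \<le> alpha k" "alpha k \<le> alpha K" using that alpha_nonneg alpha_mono by auto
      have s0: "c k * (d k)\<^sup>2 \<le> 2 * sk k" using step[of k] by (simp add: sk_def)
      have "0 \<le> c k * (d k)\<^sup>2" using cpos[of k] by simp
      then have "alpha k * (c k * (d k)\<^sup>2) \<le> alpha K * (c k * (d k)\<^sup>2)" using a mult_right_mono by blast
      also have "\<dots> \<le> alpha K * (2 * sk k)" using s0 aK mult_left_mono by blast
      finally show ?thesis by (simp add: mult.assoc)
    qed
    then have "(\<Sum>k=0..K. alpha k * c k * (d k)\<^sup>2) \<le> (\<Sum>k=0..K. 2 * alpha K * sk k)"
      by (rule sum_mono)
    also have "\<dots> = 2 * alpha K * ((\<Sum>k=0..K. psi 0 (x k) - psi 0 (x (Suc k))) + (\<Sum>k=0..K. (norm (zeta k))\<^sup>2 / (2 * beta k)))"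
      by (simp add: sk_def sum.distrib flip: sum_distrib_left)
    also have "(\<Sum>k=0..K. psi 0 (x k) - psi 0 (x (Suc k))) = psi 0 (x 0) - psi 0 (x (Suc K))"
      using sum_telescope[of "\<lambda>k. psi 0 (x k)" K] by (simp add: atLeast0AtMost)
    also have "2 * alpha K * (psi 0 (x 0) - psi 0 (x (Suc K)) + (\<Sum>k=0..K. (norm (zeta k))\<^sup>2 / (2 * beta k)))
        \<le> 2 * alpha K * (psi 0 (x 0) - psistar + (\<Sum>k=0..K. (norm (zeta k))\<^sup>2 / (2 * beta k)))"
      using psistar_le[of "Suc K"] aK by (intro mult_left_mono) auto
    also have "\<dots> = 2 * alpha K * (psi 0 (x 0) - psistar) + (\<Sum>k=0..K. alpha K * (norm (zeta k))\<^sup>2 / beta k)"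
      by (simp add: algebra_simps sum_distrib_left)
    finally show ?thesis .
  qed
  have Lsum: "(\<Sum>i=1..m. lam (Suc k) i * Lc i) \<le> B * nL" for k
  proof -
    have "(\<Sum>i=1..m. lam (Suc k) i * Lc i) = (\<Sum>i=1..m. \<bar>lam (Suc k) i\<bar> * \<bar>Lc i\<bar>)"
      using lam_nonneg L_nonneg by (intro sum.cong) auto
    also have "\<dots> \<le> L2_set (lam (Suc k)) {1..m} * L2_set Lc {1..m}" by (rule L2_set_mult_ineq)
    also have "\<dots> \<le> B * nL"
      using lam_bound[of k] unfolding nL_def vnorm_def L2_set_def
      by (intro mult_right_mono) (auto intro: sum_nonneg)
    finally show ?thesis .
  qed
  have nL0: "0 \<le> nL" by (simp add: nL_def vnorm_def sum_nonneg)
  have Mpos: "0 < M k" for k proof - have "0 \<le> 2 * B * nL" using B_pos nL0 by simp then show ?thesis using gamma_pos[of k] L0_pos by (simp add: M_def) qed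
  have sn: "setnorm_minus (lagr_subdiff C gf chi m (lam (Suc k)) (x (Suc k))) \<le> M k * d k + norm (zeta k)"
    and sn0: "0 \<le> setnorm_minus (lagr_subdiff C gf chi m (lam (Suc k)) (x (Suc k)))" for k
  proof -
    define Dl where "Dl = x (Suc k) - x k"
    define l where "l = lam (Suc k)"
    obtain v0 v where v0: "v0 \<in> subdiff C (chi 0) (x (Suc k))"
      and v: "\<forall>i\<in>{1..m}. v i \<in> subdiff C (chi i) (x (Suc k))"
      and kkt: "0 = G k + gamma k *\<^sub>R Dl + v0
               + (\<Sum>i=1..m. l i *\<^sub>R (gf i (x k) + Lc i *\<^sub>R Dl + v i))"
      using lam_kkt[of k] unfolding Dl_def l_def by blast
    define w where "w = gf 0 (x (Suc k)) + v0 + (\<Sum>i=1..m. l i *\<^sub>R (gf i (x (Suc k)) + v i))"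
    have wS: "w \<in> lagr_subdiff C gf chi m (lam (Suc k)) (x (Suc k))"
      unfolding lagr_subdiff_def w_def l_def using v0 v by blast
    have v0e: "v0 = - (G k + gamma k *\<^sub>R Dl + (\<Sum>i=1..m. l i *\<^sub>R (gf i (x k) + Lc i *\<^sub>R Dl + v i)))"
      using kkt by (simp add: algebra_simps eq_neg_iff_add_eq_0)
    have "w = (gf 0 (x (Suc k)) - gf 0 (x k)) - zeta k - gamma k *\<^sub>R Dl
        + ((\<Sum>i=1..m. l i *\<^sub>R (gf i (x (Suc k)) + v i)) - (\<Sum>i=1..m. l i *\<^sub>R (gf i (x k) + Lc i *\<^sub>R Dl + v i)))"
      unfolding w_def v0e zeta_def by (simp add: algebra_simps)
    also have "(\<Sum>i=1..m. l i *\<^sub>R (gf i (x (Suc k)) + v i)) - (\<Sum>i=1..m. l i *\<^sub>R (gf i (x k) + Lc i *\<^sub>R Dl + v i))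
        = (\<Sum>i=1..m. l i *\<^sub>R ((gf i (x (Suc k)) - gf i (x k)) - Lc i *\<^sub>R Dl))"
      by (simp add: sum_subtractf[symmetric] algebra_simps)
    finally have we: "w = (gf 0 (x (Suc k)) - gf 0 (x k)) - zeta k - gamma k *\<^sub>R Dl
        + (\<Sum>i=1..m. l i *\<^sub>R ((gf i (x (Suc k)) - gf i (x k)) - Lc i *\<^sub>R Dl))" .
    have nD: "norm Dl = d k" by (simp add: Dl_def d_def)
    have g0: "norm (gf 0 (x (Suc k)) - gf 0 (x k)) \<le> Lc 0 * d k"
      using gf_lip[of 0 "x (Suc k)" "x k"] xC by (simp add: d_def)
    have gi: "norm (l i *\<^sub>R ((gf i (x (Suc k)) - gf i (x k)) - Lc i *\<^sub>R Dl)) \<le> 2 * d k * (l i * Lc i)"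
      if i: "i \<in> {1..m}" for i
    proof -
      have l0: "0 \<le> l i" using lam_nonneg i by (simp add: l_def)
      have Li: "0 \<le> Lc i" using L_nonneg i by auto
      have "norm ((gf i (x (Suc k)) - gf i (x k)) - Lc i *\<^sub>R Dl) \<le> norm (gf i (x (Suc k)) - gf i (x k)) + norm (Lc i *\<^sub>R Dl)"
        by (rule norm_triangle_ineq4)
      also have "\<dots> \<le> Lc i * d k + Lc i * d k"
        using gf_lip[of i "x (Suc k)" "x k"] xC i Li nD by (simp add: d_def)
      finally have "norm ((gf i (x (Suc k)) - gf i (x k)) - Lc i *\<^sub>R Dl) \<le> 2 * Lc i * d k" by simp
      then have "l i * norm ((gf i (x (Suc k)) - gf i (x k)) - Lc i *\<^sub>R Dl) \<le> l i * (2 * Lc i * d k)"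
        using l0 by (rule mult_left_mono)
      moreover have "norm (l i *\<^sub>R ((gf i (x (Suc k)) - gf i (x k)) - Lc i *\<^sub>R Dl)) = l i * norm ((gf i (x (Suc k)) - gf i (x k)) - Lc i *\<^sub>R Dl)" using l0 by (simp only: norm_scaleR abs_of_nonneg)
      ultimately show ?thesis using l0 by (simp add: mult_ac)
    qed
    have "norm w \<le> norm (gf 0 (x (Suc k)) - gf 0 (x k)) + norm (zeta k) + norm (gamma k *\<^sub>R Dl)
        + norm (\<Sum>i=1..m. l i *\<^sub>R ((gf i (x (Suc k)) - gf i (x k)) - Lc i *\<^sub>R Dl))"
      unfolding we by (smt (verit) norm_triangle_ineq norm_triangle_ineq4)
    also have "norm (\<Sum>i=1..m. l i *\<^sub>R ((gf i (x (Suc k)) - gf i (x k)) - Lc i *\<^sub>R Dl))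
        \<le> (\<Sum>i=1..m. 2 * d k * (l i * Lc i))"
      by (rule order_trans[OF norm_sum sum_mono]) (use gi in auto)
    also have "\<dots> = 2 * d k * (\<Sum>i=1..m. l i * Lc i)" by (simp add: sum_distrib_left)
    also have "\<dots> \<le> 2 * d k * (B * nL)"
      using Lsum[of k] by (intro mult_left_mono) (auto simp: l_def d_def)
    finally have "norm w \<le> Lc 0 * d k + norm (zeta k) + gamma k * d k + 2 * d k * (B * nL)"
      using g0 nD gamma_pos[of k] L0_pos by simp
    then have nw: "norm w \<le> M k * d k + norm (zeta k)" by (simp add: M_def algebra_simps)
    have bdd: "bdd_below (norm ` lagr_subdiff C gf chi m (lam (Suc k)) (x (Suc k)))"
      by (rule bdd_belowI[of _ 0]) auto
    show "setnorm_minus (lagr_subdiff C gf chi m (lam (Suc k)) (x (Suc k))) \<le> M k * d k + norm (zeta k)"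
      unfolding setnorm_minus_def using cInf_lower[OF imageI[OF wS] bdd] nw by linarith
    show "0 \<le> setnorm_minus (lagr_subdiff C gf chi m (lam (Suc k)) (x (Suc k)))"
      unfolding setnorm_minus_def using wS by (intro cInf_greatest) auto
  qed
  have p2: "(\<Sum>i=1..m. lam (Suc k) i * \<bar>f i (x (Suc k)) + chi i (x (Suc k)) - eta i\<bar>)
      \<le> B * vnorm m (\<lambda>i. eta i - etak k i) + B * nL * (d k)\<^sup>2" for k
  proof -
    define l where "l = lam (Suc k)"
    have each: "l i * \<bar>f i (x (Suc k)) + chi i (x (Suc k)) - eta i\<bar>
        \<le> l i * (eta i - etak k i) + (d k)\<^sup>2 * (l i * Lc i)" if i: "i \<in> {1..m}" for i
    proof (cases "l i = 0")
      case True then show ?thesis by simp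
    next
      case False
      have l0: "0 \<le> l i" using lam_nonneg i by (simp add: l_def)
      have eq: "f i (x k) + inner (gf i (x k)) (x (Suc k) - x k) + Lc i / 2 * (norm (x (Suc k) - x k))\<^sup>2
            + chi i (x (Suc k)) = etak k i"
        using lam_cs[OF i, of k] False by (simp add: l_def)
      have lo: "f i (x k) + inner (gf i (x k)) (x (Suc k) - x k) - Lc i / 2 * (norm (x (Suc k) - x k))\<^sup>2 \<le> f i (x (Suc k))"
        using desc_lo[of i "x k" "x (Suc k)"] i xC by auto
      have up: "f i (x (Suc k)) \<le> f i (x k) + inner (gf i (x k)) (x (Suc k) - x k) + Lc i / 2 * (norm (x (Suc k) - x k))\<^sup>2" using desc_up[of i "x k" "x (Suc k)"] i xC by auto
      have "\<bar>f i (x (Suc k)) + chi i (x (Suc k)) - eta i\<bar> \<le> eta i - etak k i + Lc i * (d k)\<^sup>2"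
        using eq lo up etak_lt[OF i, of "Suc k"] eta_step[OF i, of k] unfolding psi_def d_def by (simp add: abs_le_iff)
      then have "l i * \<bar>f i (x (Suc k)) + chi i (x (Suc k)) - eta i\<bar> \<le> l i * (eta i - etak k i + Lc i * (d k)\<^sup>2)"
        using l0 by (rule mult_left_mono)
      then show ?thesis by (simp add: algebra_simps)
    qed
    have "(\<Sum>i=1..m. l i * \<bar>f i (x (Suc k)) + chi i (x (Suc k)) - eta i\<bar>)
        \<le> (\<Sum>i=1..m. l i * (eta i - etak k i) + (d k)\<^sup>2 * (l i * Lc i))"
      by (rule sum_mono) (use each in auto)
    also have "\<dots> = (\<Sum>i=1..m. l i * (eta i - etak k i)) + (d k)\<^sup>2 * (\<Sum>i=1..m. l i * Lc i)"
      by (simp add: sum.distrib sum_distrib_left)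
    also have "(\<Sum>i=1..m. l i * (eta i - etak k i)) \<le> B * vnorm m (\<lambda>i. eta i - etak k i)"
    proof -
      have "(\<Sum>i=1..m. l i * (eta i - etak k i)) \<le> (\<Sum>i=1..m. \<bar>l i\<bar> * \<bar>eta i - etak k i\<bar>)"
        by (rule sum_mono) (simp add: abs_mult[symmetric])
      also have "\<dots> \<le> L2_set l {1..m} * L2_set (\<lambda>i. eta i - etak k i) {1..m}" by (rule L2_set_mult_ineq)
      also have "\<dots> \<le> B * vnorm m (\<lambda>i. eta i - etak k i)"
        using lam_bound[of k] unfolding l_def vnorm_def L2_set_def
        by (intro mult_right_mono) (auto intro: sum_nonneg)
      finally show ?thesis .
    qed
    also have "(d k)\<^sup>2 * (\<Sum>i=1..m. l i * Lc i) \<le> (d k)\<^sup>2 * (B * nL)"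
      using Lsum[of k] by (intro mult_left_mono) (auto simp: l_def)
    finally show ?thesis by (simp add: l_def algebra_simps)
  qed
  have psi0_ge: "psistar \<le> psi 0 (x 0)" by (rule psistar_le)
  have LD: "Lc 0 * D\<^sup>2 = psi 0 (x 0) - psistar"
    using psi0_ge L0_pos unfolding D_def psi_def by simp
  let ?S = "\<lambda>k. setnorm_minus (lagr_subdiff C gf chi m (lam (Suc k)) (x (Suc k)))"
  have t1: "alpha k * c k / (4 * (M k)\<^sup>2) * (?S k)\<^sup>2
      \<le> alpha k * c k * (d k)\<^sup>2 / 2 + alpha k * c k / (2 * (M k)\<^sup>2) * (norm (zeta k))\<^sup>2"
    if "k \<in> {0..K}" for k
  proof -
    have a: "0 \<le> alpha k * c k" using alpha_nonneg that cpos[of k] by simp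
    have d0: "0 \<le> d k" by (simp add: d_def)
    have "(?S k)\<^sup>2 \<le> (M k * d k + norm (zeta k))\<^sup>2"
      using sn[of k] sn0[of k] by (rule power_mono)
    also have "\<dots> \<le> 2 * (M k)\<^sup>2 * (d k)\<^sup>2 + 2 * (norm (zeta k))\<^sup>2"
    proof -
      have "0 \<le> (M k * d k - norm (zeta k))\<^sup>2" by simp
      then show ?thesis by (simp add: power2_eq_square algebra_simps)
    qed
    finally have sq: "(?S k)\<^sup>2 \<le> 2 * (M k)\<^sup>2 * (d k)\<^sup>2 + 2 * (norm (zeta k))\<^sup>2" .
    have "alpha k * c k / (4 * (M k)\<^sup>2) * (?S k)\<^sup>2 \<le> alpha k * c k / (4 * (M k)\<^sup>2) * (2 * (M k)\<^sup>2 * (d k)\<^sup>2 + 2 * (norm (zeta k))\<^sup>2)"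
      using a Mpos[of k] sq by (intro mult_left_mono) auto
    also have "\<dots> = alpha k * c k * (d k)\<^sup>2 / 2 + alpha k * c k / (2 * (M k)\<^sup>2) * (norm (zeta k))\<^sup>2"
      using Mpos[of k] by (simp add: field_simps power2_eq_square)
    finally show ?thesis .
  qed
  have part1: "(\<Sum>k=0..K. alpha k * c k / (4 * (M k)\<^sup>2) * (?S k)\<^sup>2)
      \<le> Lc 0 * D\<^sup>2 * alpha K + (\<Sum>k=0..K. (alpha k * c k / (2 * (M k)\<^sup>2) + alpha K / (2 * beta k)) * (norm (zeta k))\<^sup>2)"
  proof -
    have "(\<Sum>k=0..K. alpha k * c k / (4 * (M k)\<^sup>2) * (?S k)\<^sup>2)
        \<le> (\<Sum>k=0..K. alpha k * c k * (d k)\<^sup>2 / 2 + alpha k * c k / (2 * (M k)\<^sup>2) * (norm (zeta k))\<^sup>2)"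
      by (rule sum_mono) (rule t1)
    also have "\<dots> = (\<Sum>k=0..K. alpha k * c k * (d k)\<^sup>2) / 2 + (\<Sum>k=0..K. alpha k * c k / (2 * (M k)\<^sup>2) * (norm (zeta k))\<^sup>2)"
      by (simp add: sum.distrib sum_divide_distrib)
    also have "\<dots> \<le> alpha K * (psi 0 (x 0) - psistar) + (\<Sum>k=0..K. alpha K * (norm (zeta k))\<^sup>2 / beta k) / 2
        + (\<Sum>k=0..K. alpha k * c k / (2 * (M k)\<^sup>2) * (norm (zeta k))\<^sup>2)"
      using sum1 by simp
    also have "\<dots> = Lc 0 * D\<^sup>2 * alpha K + (\<Sum>k=0..K. (alpha k * c k / (2 * (M k)\<^sup>2) + alpha K / (2 * beta k)) * (norm (zeta k))\<^sup>2)"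
      by (simp add: LD sum_divide_distrib sum.distrib algebra_simps)
    finally show ?thesis .
  qed
  have part2: "(\<Sum>k=0..K. alpha k * c k * (\<Sum>i=1..m. lam (Suc k) i * \<bar>f i (x (Suc k)) + chi i (x (Suc k)) - eta i\<bar>))
      \<le> 2 * B * Lc 0 * nL * D\<^sup>2 * alpha K + B * nL * (\<Sum>k=0..K. alpha K * (norm (zeta k))\<^sup>2 / beta k)
        + B * (\<Sum>k=0..K. alpha k * c k * vnorm m (\<lambda>i. eta i - etak k i))"
  proof -
    have "(\<Sum>k=0..K. alpha k * c k * (\<Sum>i=1..m. lam (Suc k) i * \<bar>f i (x (Suc k)) + chi i (x (Suc k)) - eta i\<bar>))
        \<le> (\<Sum>k=0..K. alpha k * c k * (B * vnorm m (\<lambda>i. eta i - etak k i) + B * nL * (d k)\<^sup>2))"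
      by (rule sum_mono, rule mult_left_mono[OF p2]) (simp add: alpha_nonneg cpos less_imp_le)
    also have "\<dots> = B * (\<Sum>k=0..K. alpha k * c k * vnorm m (\<lambda>i. eta i - etak k i)) + B * nL * (\<Sum>k=0..K. alpha k * c k * (d k)\<^sup>2)"
      by (simp add: sum.distrib sum_distrib_left algebra_simps)
    also have "\<dots> \<le> B * (\<Sum>k=0..K. alpha k * c k * vnorm m (\<lambda>i. eta i - etak k i))
        + B * nL * (2 * alpha K * (psi 0 (x 0) - psistar) + (\<Sum>k=0..K. alpha K * (norm (zeta k))\<^sup>2 / beta k))"
      using sum1 B_pos nL0 by (intro add_left_mono mult_left_mono) auto
    also have "\<dots> = 2 * B * Lc 0 * nL * D\<^sup>2 * alpha K + B * nL * (\<Sum>k=0..K. alpha K * (norm (zeta k))\<^sup>2 / beta k)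
        + B * (\<Sum>k=0..K. alpha k * c k * vnorm m (\<lambda>i. eta i - etak k i))"
      by (simp add: LD[symmetric] algebra_simps)
    finally show ?thesis .
  qed
  show ?thesis using part1 part2 unfolding c_def M_def nL_def zeta_def by simp
qed

end
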